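(* Let $0\le q<d$ and let $X\subset Y$ be bounded cubical sets in $\mathbb{R}^d$. Then $$|\beta_q(Y)-\beta_q(X)|\le \#Y-\#X.$$
   Context: An elementary interval is $[l,l+1]$ or $[l]=[l,l]$ with $l\in\mathbb{Z}$; an elementary cube in $\mathbb{R}^d$ is a product of $d$ elementary intervals, of dimension equal to the number of nondegenerate factors. A cubical set is a union of elementary cubes. For a cubical set $X$, $\#X$ is the number of elementary cubes (of all dimensions) contained in $X$. $C_k(X)$ is the free $\mathbb{Z}$-module on the $k$-dimensional elementary cubes contained in $X$, with the standard cubical boundary operator $\partial\widehat Q=\sum_{j=1}^k(-1)^{j-1}(\widehat{Q_j^+}-\widehat{Q_j^-})$ ($Q_j^\pm$ obtained by replacing the $j$-th nondegenerate factor $[l_j,l_j+1]$ by $[l_j+1]$, resp. $[l_j]$); $H_k(X)$ is its homology, and for bounded $X$, $\beta_k(X)$ is the rank of the free part of $H_k(X)$. *)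

theory Defs
  imports Complex_Main "HOL-Algebra.Free_Abelian_Groups" "HOL-Library.Poly_Mapping"
begin

text \<open>An elementary interval is encoded as a pair (l, b): b = True means [l, l+1],
  b = False means the degenerate interval [l] = [l, l].
  Points of R^d are real lists of length d.\<close>

type_synonym elem_cube = "(int \<times> bool) list"

definition interval_set :: "int \<times> bool \<Rightarrow> real set" where
  "interval_set I = (if snd I then {real_of_int (fst I) .. real_of_int (fst I) + 1}
                     else {real_of_int (fst I)})"

definition cube_set :: "elem_cube \<Rightarrow> real list set" where
  "cube_set Q = {x. length x = length Q \<and> (\<forall>i<length Q. x ! i \<in> interval_set (Q ! i))}"

definition cube_dim :: "elem_cube \<Rightarrow> nat" where
  "cube_dim Q = card {i. i < length Q \<and> snd (Q ! i)}"

definition cubical :: "nat \<Rightarrow> real list set \<Rightarrow> bool" where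
  "cubical d A \<longleftrightarrow> (\<exists>QS. (\<forall>Q\<in>QS. length Q = d) \<and> A = Union (cube_set ` QS))"

definition bounded_pts :: "real list set \<Rightarrow> bool" where
  "bounded_pts A \<longleftrightarrow> (\<exists>M. \<forall>x\<in>A. \<forall>i<length x. \<bar>x ! i\<bar> \<le> M)"

text \<open>All elementary cubes (of any dimension) in R^d contained in A; #A is its cardinality.\<close>
definition cubes_of :: "nat \<Rightarrow> real list set \<Rightarrow> elem_cube set" where
  "cubes_of d A = {Q. length Q = d \<and> cube_set Q \<subseteq> A}"

definition num_cubes :: "nat \<Rightarrow> real list set \<Rightarrow> nat" where
  "num_cubes d A = card (cubes_of d A)"

definition kcubes_of :: "nat \<Rightarrow> nat \<Rightarrow> real list set \<Rightarrow> elem_cube set" where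
  "kcubes_of d k A = {Q \<in> cubes_of d A. cube_dim Q = k}"

definition chain_group :: "nat \<Rightarrow> nat \<Rightarrow> real list set \<Rightarrow> (elem_cube \<Rightarrow>\<^sub>0 int) monoid" where
  "chain_group d k A = free_Abelian_group (kcubes_of d k A)"

text \<open>Q_j^+ and Q_j^- at list position i (assumed nondegenerate).\<close>
definition face_plus :: "elem_cube \<Rightarrow> nat \<Rightarrow> elem_cube" where
  "face_plus Q i = Q[i := (fst (Q ! i) + 1, False)]"

definition face_minus :: "elem_cube \<Rightarrow> nat \<Rightarrow> elem_cube" where
  "face_minus Q i = Q[i := (fst (Q ! i), False)]"

text \<open>Cubical boundary of an elementary cube; the sign is (-1)^(j-1) where the factor at
  position i is the j-th nondegenerate factor, i.e. j-1 nondegenerate factors precede it.\<close>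
definition cube_boundary :: "elem_cube \<Rightarrow> elem_cube \<Rightarrow>\<^sub>0 int" where
  "cube_boundary Q =
     (\<Sum>i \<in> {i. i < length Q \<and> snd (Q ! i)}.
        frag_cmul ((-1) ^ card {j. j < i \<and> snd (Q ! j)})
          (frag_of (face_plus Q i) - frag_of (face_minus Q i)))"

definition boundary :: "(elem_cube \<Rightarrow>\<^sub>0 int) \<Rightarrow> (elem_cube \<Rightarrow>\<^sub>0 int)" where
  "boundary c = frag_extend cube_boundary c"

definition cycles :: "nat \<Rightarrow> nat \<Rightarrow> real list set \<Rightarrow> (elem_cube \<Rightarrow>\<^sub>0 int) set" where
  "cycles d k A = {c \<in> carrier (chain_group d k A). boundary c = 0}"

definition boundaries :: "nat \<Rightarrow> nat \<Rightarrow> real list set \<Rightarrow> (elem_cube \<Rightarrow>\<^sub>0 int) set" where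
  "boundaries d k A = boundary ` carrier (chain_group d (Suc k) A)"

definition homology_group :: "nat \<Rightarrow> nat \<Rightarrow> real list set \<Rightarrow> (elem_cube \<Rightarrow>\<^sub>0 int) set monoid" where
  "homology_group d k A = ((chain_group d k A)\<lparr>carrier := cycles d k A\<rparr>) Mod (boundaries d k A)"

definition free_rank :: "('a, 'b) monoid_scheme \<Rightarrow> nat" where
  "free_rank G = Sup {n. \<exists>g. (\<forall>i<n. g i \<in> carrier G) \<and>
      (\<forall>k :: nat \<Rightarrow> int. finprod G (\<lambda>i. g i [^]\<^bsub>G\<^esub> k i) {..<n} = \<one>\<^bsub>G\<^esub> \<longrightarrow> (\<forall>i<n. k i = 0))}"

definition betti :: "nat \<Rightarrow> nat \<Rightarrow> real list set \<Rightarrow> nat" where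
  "betti d k A = free_rank (homology_group d k A)"

end

theory Submission
  imports Defs
begin


definition indepI :: "('a \<Rightarrow>\<^sub>0 int) set \<Rightarrow> nat set \<Rightarrow> (nat \<Rightarrow> 'a \<Rightarrow>\<^sub>0 int) \<Rightarrow> bool" where
  "indepI B I z \<longleftrightarrow> (\<forall>k. (\<Sum>i\<in>I. frag_cmul (k i) (z i)) \<in> B \<longrightarrow> (\<forall>i\<in>I. k i = 0))"

definition closedM :: "('a \<Rightarrow>\<^sub>0 int) set \<Rightarrow> bool" where
  "closedM M \<longleftrightarrow> 0 \<in> M \<and> (\<forall>a\<in>M. \<forall>b\<in>M. a + b \<in> M) \<and> (\<forall>a\<in>M. \<forall>k. frag_cmul k a \<in> M)"

lemma closedM_diff: "closedM M \<Longrightarrow> a \<in> M \<Longrightarrow> b \<in> M \<Longrightarrow> a - b \<in> M"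
  unfolding closedM_def by (metis diff_conv_add_uminus frag_cmul_minus_one)

lemma closedM_sum: "closedM M \<Longrightarrow> (\<And>i. i \<in> I \<Longrightarrow> f i \<in> M) \<Longrightarrow> sum f I \<in> M"
  by (induction I rule: infinite_finite_induct) (auto simp: closedM_def)

lemma kill_one:
  fixes P :: 'a
  assumes fin: "finite I" and ind: "indepI B I z" and zM: "\<forall>i\<in>I. z i \<in> M" and cM: "closedM M"
  shows "\<exists>I' w. I' \<subseteq> I \<and> card I \<le> card I' + 1 \<and> indepI B I' w \<and> (\<forall>i\<in>I'. w i \<in> M)
     \<and> (\<forall>i\<in>I'. poly_mapping.lookup (w i) P = 0)
     \<and> (\<forall>Q. (\<forall>i\<in>I. poly_mapping.lookup (z i) Q = 0) \<longrightarrow> (\<forall>i\<in>I'. poly_mapping.lookup (w i) Q = 0))"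
proof (cases "\<forall>i\<in>I. poly_mapping.lookup (z i) P = 0")
  case True
  then show ?thesis using ind zM by (intro exI[of _ I] exI[of _ z]) auto
next
  case False
  then obtain j where j: "j \<in> I" and a0: "poly_mapping.lookup (z j) P \<noteq> 0" by auto
  define a where "a = poly_mapping.lookup (z j) P"
  define p where "p i = poly_mapping.lookup (z i) P" for i
  define w where "w i = frag_cmul a (z i) - frag_cmul (p i) (z j)" for i
  define I' where "I' = I - {j}"
  have cardI: "card I = card I' + 1" using fin j unfolding I'_def
    by (simp add: card_Diff_singleton) (metis card_0_eq empty_iff j Suc_pred neq0_conv fin)
  have wM: "\<forall>i\<in>I'. w i \<in> M" unfolding w_def I'_def using zM j cM
    by (auto intro!: closedM_diff) (auto simp: closedM_def)
  have wP: "\<forall>i\<in>I'. poly_mapping.lookup (w i) P = 0"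
    by (simp add: w_def lookup_minus a_def p_def mult.commute)
  have wQ: "\<forall>Q. (\<forall>i\<in>I. poly_mapping.lookup (z i) Q = 0) \<longrightarrow> (\<forall>i\<in>I'. poly_mapping.lookup (w i) Q = 0)"
    using j by (auto simp: w_def lookup_minus I'_def)
  have "indepI B I' w"
    unfolding indepI_def
  proof (intro allI impI)
    fix k assume kB: "(\<Sum>i\<in>I'. frag_cmul (k i) (w i)) \<in> B"
    define k' where "k' i = (if i = j then - (\<Sum>l\<in>I'. k l * p l) else a * k i)" for i
    have eq: "(\<Sum>i\<in>I. frag_cmul (k' i) (z i)) = (\<Sum>i\<in>I'. frag_cmul (k i) (w i))"
    proof (rule poly_mapping_eqI)
      fix x
      have "poly_mapping.lookup (\<Sum>i\<in>I. frag_cmul (k' i) (z i)) x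
          = k' j * poly_mapping.lookup (z j) x + (\<Sum>i\<in>I'. k' i * poly_mapping.lookup (z i) x)"
        unfolding I'_def using fin j by (simp add: lookup_sum sum.remove lookup_add)
      also have "\<dots> = (\<Sum>i\<in>I'. k i * (a * poly_mapping.lookup (z i) x - p i * poly_mapping.lookup (z j) x))"
        unfolding k'_def I'_def
        by (simp add: sum_distrib_right sum_distrib_left sum_subtractf right_diff_distrib algebra_simps sum_negf)
      also have "\<dots> = poly_mapping.lookup (\<Sum>i\<in>I'. frag_cmul (k i) (w i)) x"
        by (simp add: lookup_sum w_def lookup_minus)
      finally show "poly_mapping.lookup (\<Sum>i\<in>I. frag_cmul (k' i) (z i)) x
          = poly_mapping.lookup (\<Sum>i\<in>I'. frag_cmul (k i) (w i)) x" .
    qed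
    have "\<forall>i\<in>I. k' i = 0" using ind kB eq unfolding indepI_def by metis
    then show "\<forall>i\<in>I'. k i = 0" using a0 unfolding k'_def I'_def a_def
      by (metis DiffD1 DiffD2 insertI1 mult_eq_0_iff)
  qed
  then show ?thesis using cardI wM wP wQ unfolding I'_def
    by (intro exI[of _ "I - {j}"] exI[of _ w]) auto
qed

lemma kill_set:
  assumes S: "finite S" and fin: "finite I" and ind: "indepI B I z" and zM: "\<forall>i\<in>I. z i \<in> M"
    and cM: "closedM M"
  shows "\<exists>I' w. I' \<subseteq> I \<and> card I \<le> card I' + card S \<and> indepI B I' w \<and> (\<forall>i\<in>I'. w i \<in> M)
     \<and> (\<forall>i\<in>I'. \<forall>P\<in>S. poly_mapping.lookup (w i) P = 0)"
  using S
proof (induction S rule: finite_induct)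
  case empty
  then show ?case using ind zM by (intro exI[of _ I] exI[of _ z]) auto
next
  case (insert P S)
  then obtain I1 w1 where I1: "I1 \<subseteq> I" "card I \<le> card I1 + card S" "indepI B I1 w1"
    "\<forall>i\<in>I1. w1 i \<in> M" "\<forall>i\<in>I1. \<forall>P\<in>S. poly_mapping.lookup (w1 i) P = 0" by blast
  have "finite I1" using I1(1) fin finite_subset by blast
  from kill_one[OF this I1(3) I1(4) cM, of P] obtain I2 w2 where I2: "I2 \<subseteq> I1" "card I1 \<le> card I2 + 1"
    "indepI B I2 w2" "\<forall>i\<in>I2. w2 i \<in> M" "\<forall>i\<in>I2. poly_mapping.lookup (w2 i) P = 0"
    "\<forall>Q. (\<forall>i\<in>I1. poly_mapping.lookup (w1 i) Q = 0) \<longrightarrow> (\<forall>i\<in>I2. poly_mapping.lookup (w2 i) Q = 0)"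
    by blast
  show ?case
    apply (rule exI[of _ I2], rule exI[of _ w2])
    using I1 I2 insert by auto
qed

definition Bspan :: "('a \<Rightarrow>\<^sub>0 int) set \<Rightarrow> ('b \<Rightarrow> 'a \<Rightarrow>\<^sub>0 int) \<Rightarrow> 'b set \<Rightarrow> ('a \<Rightarrow>\<^sub>0 int) set" where
  "Bspan B b S = {\<beta> + (\<Sum>P\<in>S. frag_cmul (t P) (b P)) | \<beta> t. \<beta> \<in> B}"

lemma closedM_Bspan:
  assumes "closedM B" shows "closedM (Bspan B b S)"
  unfolding closedM_def
proof (intro conjI ballI allI)
  show "0 \<in> Bspan B b S" unfolding Bspan_def using assms
    by (auto simp: closedM_def intro!: exI[of _ 0] exI[of _ "\<lambda>_. 0"])
next
  fix x y assume "x \<in> Bspan B b S" "y \<in> Bspan B b S"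
  then obtain \<beta>1 t1 \<beta>2 t2 where "x = \<beta>1 + (\<Sum>P\<in>S. frag_cmul (t1 P) (b P))" "\<beta>1 \<in> B"
    "y = \<beta>2 + (\<Sum>P\<in>S. frag_cmul (t2 P) (b P))" "\<beta>2 \<in> B" unfolding Bspan_def by blast
  then show "x + y \<in> Bspan B b S" unfolding Bspan_def using assms
    by (auto simp: closedM_def frag_cmul_distrib sum.distrib algebra_simps
        intro!: exI[of _ "\<beta>1 + \<beta>2"] exI[of _ "\<lambda>P. t1 P + t2 P"])
next
  fix x k assume "x \<in> Bspan B b S"
  then obtain \<beta>1 t1 where "x = \<beta>1 + (\<Sum>P\<in>S. frag_cmul (t1 P) (b P))" "\<beta>1 \<in> B"
    unfolding Bspan_def by blast
  then show "frag_cmul k x \<in> Bspan B b S" unfolding Bspan_def using assms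
    by (auto simp: closedM_def frag_cmul_distrib2 frag_cmul_sum
        intro!: exI[of _ "frag_cmul k \<beta>1"] exI[of _ "\<lambda>P. k * t1 P"])
qed

lemma indepI_mono: "indepI B' I x \<Longrightarrow> B \<subseteq> B' \<Longrightarrow> indepI B I x"
  unfolding indepI_def by blast

lemma add_one:
  assumes cB: "closedM B" and fin: "finite I" and ind: "indepI B I x"
  shows "\<exists>I'. I' \<subseteq> I \<and> card I \<le> card I' + 1 \<and> indepI {\<beta> + frag_cmul t c | \<beta> t. \<beta> \<in> B} I' x"
proof (cases "indepI {\<beta> + frag_cmul t c | \<beta> t. \<beta> \<in> B} I x")
  case True
  then show ?thesis by auto
next
  case False
  then obtain k \<beta> t j where kB: "(\<Sum>i\<in>I. frag_cmul (k i) (x i)) = \<beta> + frag_cmul t c" "\<beta> \<in> B"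
    and j: "j \<in> I" "k j \<noteq> 0"
    unfolding indepI_def by blast
  define I' where "I' = I - {j}"
  have cardI: "card I = card I' + 1" using fin j unfolding I'_def
    by (simp add: card_Diff_singleton) (metis card_0_eq empty_iff j Suc_pred neq0_conv fin)
  have "indepI {\<beta> + frag_cmul t c | \<beta> t. \<beta> \<in> B} I' x"
    unfolding indepI_def
  proof (intro allI impI)
    fix l assume "(\<Sum>i\<in>I'. frag_cmul (l i) (x i)) \<in> {\<beta> + frag_cmul t c | \<beta> t. \<beta> \<in> B}"
    then obtain \<beta>' t' where lB: "(\<Sum>i\<in>I'. frag_cmul (l i) (x i)) = \<beta>' + frag_cmul t' c" "\<beta>' \<in> B"
      by blast
    define l0 where "l0 i = (if i = j then 0 else l i)" for i
    have s0: "(\<Sum>i\<in>I. frag_cmul (l0 i) (x i)) = (\<Sum>i\<in>I'. frag_cmul (l i) (x i))"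
      unfolding I'_def l0_def using fin j by (simp add: sum.remove)
    define m where "m i = t * l0 i - t' * k i" for i
    have "(\<Sum>i\<in>I. frag_cmul (m i) (x i))
        = frag_cmul t (\<Sum>i\<in>I. frag_cmul (l0 i) (x i)) - frag_cmul t' (\<Sum>i\<in>I. frag_cmul (k i) (x i))"
      unfolding m_def by (simp add: frag_cmul_sum frag_cmul_diff_distrib sum_subtractf)
    also have "\<dots> = frag_cmul t \<beta>' + frag_cmul (- t') \<beta>"
      using s0 lB kB by (simp add: frag_cmul_distrib2 mult.commute)
    finally have "(\<Sum>i\<in>I. frag_cmul (m i) (x i)) \<in> B" using cB lB kB by (simp add: closedM_def)
    then have "m j = 0" using ind j unfolding indepI_def by blast
    then have t'0: "t' = 0" using j unfolding m_def l0_def by simp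
    then have "(\<Sum>i\<in>I. frag_cmul (l0 i) (x i)) \<in> B" using s0 lB by simp
    then have "\<forall>i\<in>I. l0 i = 0" using ind unfolding indepI_def by blast
    then show "\<forall>i\<in>I'. l i = 0" unfolding l0_def I'_def by (metis Diff_iff singletonI)
  qed
  then show ?thesis using cardI unfolding I'_def by (intro exI[of _ "I - {j}"]) auto
qed

lemma Bspan_insert:
  assumes "finite S" "P \<notin> S"
  shows "Bspan B b (insert P S) \<subseteq> {\<beta> + frag_cmul t (b P) | \<beta> t. \<beta> \<in> Bspan B b S}"
proof
  fix y assume "y \<in> Bspan B b (insert P S)"
  then obtain \<beta> u where y: "y = \<beta> + (\<Sum>Q\<in>insert P S. frag_cmul (u Q) (b Q))" "\<beta> \<in> B"
    unfolding Bspan_def by blast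
  then have "y = (\<beta> + (\<Sum>Q\<in>S. frag_cmul (u Q) (b Q))) + frag_cmul (u P) (b P)"
    using assms by (simp add: algebra_simps)
  moreover have "\<beta> + (\<Sum>Q\<in>S. frag_cmul (u Q) (b Q)) \<in> Bspan B b S"
    unfolding Bspan_def using y by blast
  ultimately show "y \<in> {\<beta> + frag_cmul t (b P) | \<beta> t. \<beta> \<in> Bspan B b S}" by blast
qed

lemma add_set:
  assumes S: "finite S" and cB: "closedM B" and fin: "finite I" and ind: "indepI B I x"
  shows "\<exists>I'. I' \<subseteq> I \<and> card I \<le> card I' + card S \<and> indepI (Bspan B b S) I' x"
  using S
proof (induction S rule: finite_induct)
  case empty
  have "Bspan B b {} \<subseteq> B" unfolding Bspan_def by auto
  then have "indepI (Bspan B b {}) I x" using ind indepI_mono by metis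
  then show ?case by (intro exI[of _ I]) simp
next
  case (insert P S)
  then obtain I1 where I1: "I1 \<subseteq> I" "card I \<le> card I1 + card S" "indepI (Bspan B b S) I1 x" by blast
  have "finite I1" using I1(1) fin finite_subset by blast
  from add_one[OF closedM_Bspan[OF cB] this I1(3), of "b P"] obtain I2 where
    I2: "I2 \<subseteq> I1" "card I1 \<le> card I2 + 1"
    "indepI {\<beta> + frag_cmul t (b P) | \<beta> t. \<beta> \<in> Bspan B b S} I2 x" by blast
  have "indepI (Bspan B b (insert P S)) I2 x"
    using indepI_mono[OF I2(3) Bspan_insert[OF insert(1,2)]] .
  moreover have "card (insert P S) = card S + 1" using insert(1,2) by simp
  ultimately show ?case using I1(1,2) I2(1,2) by (intro exI[of _ I2]) auto
qed

lemma rank_bound: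
  fixes z :: "nat \<Rightarrow> 'a \<Rightarrow>\<^sub>0 int"
  assumes fin: "finite I" and ind: "indepI B I z" and B0: "0 \<in> B" and S: "finite S"
    and zS: "\<forall>i\<in>I. Poly_Mapping.keys (z i) \<subseteq> S"
  shows "card I \<le> card S"
proof -
  have cM: "closedM {c. Poly_Mapping.keys c \<subseteq> S}"
    unfolding closedM_def
  proof (intro conjI ballI allI)
    fix a b :: "'a \<Rightarrow>\<^sub>0 int" assume "a \<in> {c. Poly_Mapping.keys c \<subseteq> S}" "b \<in> {c. Poly_Mapping.keys c \<subseteq> S}"
    then show "a + b \<in> {c. Poly_Mapping.keys c \<subseteq> S}" using keys_add[of a b] by auto
  next
    fix a :: "'a \<Rightarrow>\<^sub>0 int" and k :: int assume "a \<in> {c. Poly_Mapping.keys c \<subseteq> S}"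
    then show "frag_cmul k a \<in> {c. Poly_Mapping.keys c \<subseteq> S}" using keys_cmul[of k a] by auto
  qed simp
  have zM: "\<forall>i\<in>I. z i \<in> {c. Poly_Mapping.keys c \<subseteq> S}" using zS by simp
  obtain I' w where I': "I' \<subseteq> I" "card I \<le> card I' + card S" "indepI B I' w"
    "\<forall>i\<in>I'. w i \<in> {c. Poly_Mapping.keys c \<subseteq> S}" "\<forall>i\<in>I'. \<forall>P\<in>S. poly_mapping.lookup (w i) P = 0"
    using kill_set[OF S fin ind zM cM] by (elim exE conjE) (rule that)
  have "\<forall>i\<in>I'. w i = 0"
  proof
    fix i assume i: "i \<in> I'"
    have "Poly_Mapping.keys (w i) = {}"
    proof (rule ccontr)
      assume "Poly_Mapping.keys (w i) \<noteq> {}"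
      then obtain P where P: "P \<in> Poly_Mapping.keys (w i)" by blast
      then have "P \<in> S" using I'(4) i by auto
      then have "poly_mapping.lookup (w i) P = 0" using I'(5) i by blast
      then show False using P by (simp add: in_keys_iff)
    qed
    then show "w i = 0" by simp
  qed
  then have "(\<Sum>i\<in>I'. frag_cmul ((\<lambda>_. 1) i) (w i)) = 0" by simp
  then have "(\<Sum>i\<in>I'. frag_cmul ((\<lambda>_. 1) i) (w i)) \<in> B" using B0 by simp
  then have "\<forall>i\<in>I'. (\<lambda>_. 1::int) i = 0" using I'(3) unfolding indepI_def
    by (elim allE[where x="\<lambda>_. 1"]) (erule mp)
  then have "I' = {}" by auto
  then show ?thesis using I'(2) by simp
qed




abbreviation G0 :: "('a \<Rightarrow>\<^sub>0 int) monoid" where "G0 \<equiv> free_Abelian_group UNIV"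

lemma closedM_subgroup:
  assumes "closedM (H :: ('a \<Rightarrow>\<^sub>0 int) set)" shows "subgroup H G0"
proof (rule group.subgroupI[OF group_free_Abelian_group])
  show "H \<subseteq> carrier G0" by auto
  show "H \<noteq> {}" using assms by (auto simp: closedM_def)
  fix a assume "a \<in> H"
  then show "inv\<^bsub>G0\<^esub> a \<in> H" using assms
    by (auto simp: closedM_def) (metis frag_cmul_minus_one)
next
  fix a b assume "a \<in> H" "b \<in> H"
  then show "a \<otimes>\<^bsub>G0\<^esub> b \<in> H" using assms by (auto simp: closedM_def)
qed

lemma r_coset_upd: "r_coset ((free_Abelian_group S)\<lparr>carrier := Z\<rparr>) H a = r_coset G0 H a"
  by (simp add: r_coset_def)

lemma r_coset_fag: "r_coset (free_Abelian_group S) H a = r_coset G0 H a"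
  by (simp add: r_coset_def)

lemma set_mult_fag: "set_mult (free_Abelian_group S) = set_mult G0"
  by (simp add: set_mult_def fun_eq_iff)

lemma set_mult_upd: "set_mult ((free_Abelian_group S)\<lparr>carrier := Z\<rparr>) = set_mult G0"
  by (simp add: set_mult_def fun_eq_iff)

lemma bridge:
  fixes Bd Zc :: "('a \<Rightarrow>\<^sub>0 int) set"
  assumes cB: "closedM Bd" and cZ: "closedM Zc" and ZS: "Zc \<subseteq> {c. Poly_Mapping.keys c \<subseteq> S}"
  defines "H \<equiv> ((free_Abelian_group S)\<lparr>carrier := Zc\<rparr>) Mod Bd"
  shows "{n. \<exists>g. (\<forall>i<n. g i \<in> carrier H) \<and>
      (\<forall>k :: nat \<Rightarrow> int. finprod H (\<lambda>i. g i [^]\<^bsub>H\<^esub> k i) {..<n} = \<one>\<^bsub>H\<^esub> \<longrightarrow> (\<forall>i<n. k i = 0))}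
    = {n. \<exists>z. (\<forall>i<n. z i \<in> Zc) \<and> indepI Bd {..<n} z}"
proof -
  have sB: "subgroup Bd G0" by (rule closedM_subgroup[OF cB])
  have cG0: "comm_group G0" by (rule abelian_free_Abelian_group)
  have nB: "Bd \<lhd> G0" using sB cG0 comm_group.normal_iff_subgroup by blast
  define F where "F = G0 Mod Bd"
  have cF: "comm_group F" unfolding F_def using comm_group.abelian_FactGroup[OF cG0 sB] .
  then have gF: "group F" by (simp add: comm_group_def)
  define C where "C = (\<lambda>z. Bd #>\<^bsub>G0\<^esub> z) ` Zc"
  have carrH: "carrier H = C"
    unfolding H_def C_def by (auto simp add: FactGroup_def RCOSETS_def r_coset_def)
  have HF: "H = F\<lparr>carrier := C\<rparr>"
    unfolding H_def F_def C_def by (auto simp add: FactGroup_def RCOSETS_def r_coset_def set_mult_upd)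
  have rsum: "(Bd #>\<^bsub>G0\<^esub> a) \<otimes>\<^bsub>F\<^esub> (Bd #>\<^bsub>G0\<^esub> b) = Bd #>\<^bsub>G0\<^esub> (a + b)" for a b
    unfolding F_def using normal.rcos_sum[OF nB, of a b] by simp
  have rpow: "(Bd #>\<^bsub>G0\<^esub> a) [^]\<^bsub>F\<^esub> (k::int) = Bd #>\<^bsub>G0\<^esub> (frag_cmul k a)" for a k
    unfolding F_def using normal.FactGroup_int_pow[OF nB, of a k] by simp
  have rone: "\<one>\<^bsub>F\<^esub> = Bd #>\<^bsub>G0\<^esub> 0"
  proof -
    have "Bd \<subseteq> carrier G0" by auto
    then show ?thesis unfolding F_def using group.coset_mult_one[OF group_free_Abelian_group, of Bd UNIV] by simp
  qed
  have rcarr: "Bd #>\<^bsub>G0\<^esub> a \<in> carrier F" for a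
    unfolding F_def by (auto simp: FactGroup_def RCOSETS_def)
  have sC: "subgroup C F"
  proof (rule group.subgroupI[OF gF])
    show "C \<subseteq> carrier F" unfolding C_def using rcarr by auto
    show "C \<noteq> {}" unfolding C_def using cZ by (auto simp: closedM_def)
  next
    fix x assume "x \<in> C"
    then obtain z where z: "z \<in> Zc" "x = Bd #>\<^bsub>G0\<^esub> z" unfolding C_def by blast
    have "(Bd #>\<^bsub>G0\<^esub> (- z)) \<otimes>\<^bsub>F\<^esub> x = \<one>\<^bsub>F\<^esub>" using z rsum rone by simp
    then have "inv\<^bsub>F\<^esub> x = Bd #>\<^bsub>G0\<^esub> (- z)"
      using group.inv_equality[OF gF] rcarr z by metis
    moreover have "- z \<in> Zc" using cZ z by (auto simp: closedM_def) (metis frag_cmul_minus_one)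
    ultimately show "inv\<^bsub>F\<^esub> x \<in> C" unfolding C_def by blast
  next
    fix x y assume "x \<in> C" "y \<in> C"
    then show "x \<otimes>\<^bsub>F\<^esub> y \<in> C" unfolding C_def using rsum cZ by (auto simp: closedM_def)
  qed
  have cH: "comm_group H"
  proof -
    have "group H" unfolding HF by (rule subgroup.subgroup_is_group[OF sC gF])
    then show ?thesis
      by (rule group.group_comm_groupI) (use comm_monoid.m_comm[OF comm_group.axioms(1)[OF cF]] sC in \<open>auto simp: HF subgroup_def\<close>)
  qed
  have hpow: "(Bd #>\<^bsub>G0\<^esub> a) [^]\<^bsub>H\<^esub> (k::int) = Bd #>\<^bsub>G0\<^esub> (frag_cmul k a)" if "a \<in> Zc" for a k
  proof -
    have "Bd #>\<^bsub>G0\<^esub> a \<in> C" unfolding C_def using that by blast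
    then show ?thesis unfolding HF using group.int_pow_consistent[OF gF sC] rpow by metis
  qed
  have fp: "finprod H (\<lambda>i. g i [^]\<^bsub>H\<^esub> k i) {..<n} = Bd #>\<^bsub>G0\<^esub> (\<Sum>i<n. frag_cmul (k i) (z i))"
    if "\<forall>i<n. z i \<in> Zc \<and> g i = Bd #>\<^bsub>G0\<^esub> z i" for g z k and n :: nat
    using that
  proof (induction n)
    case 0
    have "finprod H (\<lambda>i. g i [^]\<^bsub>H\<^esub> k i) {} = \<one>\<^bsub>H\<^esub>"
      by (rule comm_monoid.finprod_empty[OF comm_group.axioms(1)[OF cH]])
    then show ?case using rone by (simp add: HF)
  next
    case (Suc n)
    have mem: "g i [^]\<^bsub>H\<^esub> k i \<in> carrier H" if "i < Suc n" for i
    proof -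
      have "g i [^]\<^bsub>H\<^esub> k i = Bd #>\<^bsub>G0\<^esub> (frag_cmul (k i) (z i))" using Suc.prems that hpow by simp
      moreover have "frag_cmul (k i) (z i) \<in> Zc" using Suc.prems that cZ by (simp add: closedM_def)
      ultimately show ?thesis unfolding carrH C_def by blast
    qed
    have "finprod H (\<lambda>i. g i [^]\<^bsub>H\<^esub> k i) {..<Suc n}
        = g n [^]\<^bsub>H\<^esub> k n \<otimes>\<^bsub>H\<^esub> finprod H (\<lambda>i. g i [^]\<^bsub>H\<^esub> k i) {..<n}"
      unfolding lessThan_Suc
      by (rule comm_monoid.finprod_insert) (use cH mem in \<open>auto simp: comm_group_def\<close>)
    also have "\<dots> = (Bd #>\<^bsub>G0\<^esub> (frag_cmul (k n) (z n))) \<otimes>\<^bsub>F\<^esub> (Bd #>\<^bsub>G0\<^esub> (\<Sum>i<n. frag_cmul (k i) (z i)))"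
      using Suc hpow by (simp add: HF)
    also have "\<dots> = Bd #>\<^bsub>G0\<^esub> (\<Sum>i<Suc n. frag_cmul (k i) (z i))"
      using rsum by (simp add: add.commute)
    finally show ?case .
  qed
  have oneH: "\<one>\<^bsub>H\<^esub> = Bd" unfolding H_def by simp
  have coset_eq: "Bd #>\<^bsub>G0\<^esub> c = Bd \<longleftrightarrow> c \<in> Bd" for c
  proof
    assume "Bd #>\<^bsub>G0\<^esub> c = Bd"
    moreover have "0 \<otimes>\<^bsub>G0\<^esub> c \<in> Bd #>\<^bsub>G0\<^esub> c" using cB by (auto simp: r_coset_def closedM_def)
    ultimately show "c \<in> Bd" by simp
  next
    assume "c \<in> Bd"
    then show "Bd #>\<^bsub>G0\<^esub> c = Bd" using subgroup.rcos_const[OF sB group_free_Abelian_group] by blast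
  qed
  show ?thesis
  proof (intro equalityI subsetI)
    fix n assume "n \<in> {n. \<exists>g. (\<forall>i<n. g i \<in> carrier H) \<and>
      (\<forall>k :: nat \<Rightarrow> int. finprod H (\<lambda>i. g i [^]\<^bsub>H\<^esub> k i) {..<n} = \<one>\<^bsub>H\<^esub> \<longrightarrow> (\<forall>i<n. k i = 0))}"
    then obtain g where g: "\<forall>i<n. g i \<in> carrier H"
      "\<forall>k :: nat \<Rightarrow> int. finprod H (\<lambda>i. g i [^]\<^bsub>H\<^esub> k i) {..<n} = \<one>\<^bsub>H\<^esub> \<longrightarrow> (\<forall>i<n. k i = 0)" by blast
    have "\<forall>i. \<exists>z. i < n \<longrightarrow> z \<in> Zc \<and> g i = Bd #>\<^bsub>G0\<^esub> z"
      using g(1) unfolding carrH C_def by blast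
    then obtain z where z: "\<forall>i<n. z i \<in> Zc \<and> g i = Bd #>\<^bsub>G0\<^esub> z i" by metis
    have "indepI Bd {..<n} z" unfolding indepI_def
    proof (intro allI impI)
      fix k :: "nat \<Rightarrow> int" assume "(\<Sum>i\<in>{..<n}. frag_cmul (k i) (z i)) \<in> Bd"
      then have "finprod H (\<lambda>i. g i [^]\<^bsub>H\<^esub> k i) {..<n} = \<one>\<^bsub>H\<^esub>" using fp[OF z] coset_eq oneH by simp
      then show "\<forall>i\<in>{..<n}. k i = 0" using g(2) by simp
    qed
    then show "n \<in> {n. \<exists>z. (\<forall>i<n. z i \<in> Zc) \<and> indepI Bd {..<n} z}" using z by blast
  next
    fix n assume "n \<in> {n. \<exists>z. (\<forall>i<n. z i \<in> Zc) \<and> indepI Bd {..<n} z}"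
    then obtain z where z: "\<forall>i<n. z i \<in> Zc" "indepI Bd {..<n} z" by blast
    define g where "g i = Bd #>\<^bsub>G0\<^esub> z i" for i
    have gz: "\<forall>i<n. z i \<in> Zc \<and> g i = Bd #>\<^bsub>G0\<^esub> z i" using z g_def by simp
    have "\<forall>i<n. g i \<in> carrier H" using z unfolding carrH C_def g_def by blast
    moreover have "\<forall>k :: nat \<Rightarrow> int. finprod H (\<lambda>i. g i [^]\<^bsub>H\<^esub> k i) {..<n} = \<one>\<^bsub>H\<^esub> \<longrightarrow> (\<forall>i<n. k i = 0)"
    proof (rule allI, rule impI)
      fix k :: "nat \<Rightarrow> int" assume "finprod H (\<lambda>i. g i [^]\<^bsub>H\<^esub> k i) {..<n} = \<one>\<^bsub>H\<^esub>"
      then have "(\<Sum>i<n. frag_cmul (k i) (z i)) \<in> Bd" using fp[OF gz] coset_eq oneH by simp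
      then show "\<forall>i<n. k i = 0" using z(2) unfolding indepI_def by simp
    qed
    ultimately show "n \<in> {n. \<exists>g. (\<forall>i<n. g i \<in> carrier H) \<and>
      (\<forall>k :: nat \<Rightarrow> int. finprod H (\<lambda>i. g i [^]\<^bsub>H\<^esub> k i) {..<n} = \<one>\<^bsub>H\<^esub> \<longrightarrow> (\<forall>i<n. k i = 0))}" by blast
  qed
qed




definition rset :: "('a \<Rightarrow>\<^sub>0 int) set \<Rightarrow> ('a \<Rightarrow>\<^sub>0 int) set \<Rightarrow> nat set" where
  "rset Bd Zc = {n. \<exists>z. (\<forall>i<n. z i \<in> Zc) \<and> indepI Bd {..<n} z}"

lemma rset_card:
  assumes fin: "finite I" and ind: "indepI B I z" and zZ: "\<forall>i\<in>I. z i \<in> Zc"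
  shows "card I \<in> rset B Zc"
proof -
  obtain h where h: "bij_betw h {..<card I} I"
    using ex_bij_betw_nat_finite[OF fin] by (auto simp: atLeast0LessThan)
  define z' where "z' i = z (h i)" for i
  have "\<forall>i<card I. z' i \<in> Zc" using h zZ unfolding z'_def bij_betw_def by auto
  moreover have "indepI B {..<card I} z'"
    unfolding indepI_def
  proof (intro allI impI)
    fix k assume kB: "(\<Sum>i\<in>{..<card I}. frag_cmul (k i) (z' i)) \<in> B"
    define k' where "k' j = k (inv_into {..<card I} h j)" for j
    have "(\<Sum>j\<in>I. frag_cmul (k' j) (z j)) = (\<Sum>i\<in>{..<card I}. frag_cmul (k' (h i)) (z (h i)))"
      using sum.reindex_bij_betw[OF h, of "\<lambda>j. frag_cmul (k' j) (z j)"] by simp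
    also have "\<dots> = (\<Sum>i\<in>{..<card I}. frag_cmul (k i) (z' i))"
      unfolding k'_def z'_def
      by (rule sum.cong) (use h in \<open>auto simp: bij_betw_def\<close>)
    finally have "(\<Sum>j\<in>I. frag_cmul (k' j) (z j)) \<in> B" using kB by simp
    then have "\<forall>j\<in>I. k' j = 0" using ind unfolding indepI_def by blast
    then show "\<forall>i\<in>{..<card I}. k i = 0"
      unfolding k'_def using h by (metis bij_betw_def bij_betw_apply inv_into_f_f)
  qed
  ultimately show ?thesis unfolding rset_def by blast
qed

lemma closedM_cycles: "closedM (cycles d k A)"
  unfolding closedM_def cycles_def chain_group_def
proof (intro conjI ballI allI)
  fix a b assume "a \<in> {c \<in> carrier (free_Abelian_group (kcubes_of d k A)). boundary c = 0}"
     "b \<in> {c \<in> carrier (free_Abelian_group (kcubes_of d k A)). boundary c = 0}"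
  then show "a + b \<in> {c \<in> carrier (free_Abelian_group (kcubes_of d k A)). boundary c = 0}"
    using keys_add[of a b] by (auto simp: boundary_def frag_extend_add)
next
  fix a :: "elem_cube \<Rightarrow>\<^sub>0 int" and j :: int
  assume "a \<in> {c \<in> carrier (free_Abelian_group (kcubes_of d k A)). boundary c = 0}"
  then show "frag_cmul j a \<in> {c \<in> carrier (free_Abelian_group (kcubes_of d k A)). boundary c = 0}"
    using keys_cmul[of j a] by (auto simp: boundary_def frag_extend_cmul)
qed (simp add: boundary_def)

lemma closedM_boundaries: "closedM (boundaries d k A)"
  unfolding closedM_def boundaries_def chain_group_def
proof (intro conjI ballI allI)
  show "0 \<in> boundary ` carrier (free_Abelian_group (kcubes_of d (Suc k) A))"
    by (rule image_eqI[of _ _ 0]) (auto simp: boundary_def)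
next
  fix a b assume "a \<in> boundary ` carrier (free_Abelian_group (kcubes_of d (Suc k) A))"
     "b \<in> boundary ` carrier (free_Abelian_group (kcubes_of d (Suc k) A))"
  then obtain a' b' where "a = boundary a'" "b = boundary b'" "Poly_Mapping.keys a' \<subseteq> kcubes_of d (Suc k) A"
    "Poly_Mapping.keys b' \<subseteq> kcubes_of d (Suc k) A" by auto
  then show "a + b \<in> boundary ` carrier (free_Abelian_group (kcubes_of d (Suc k) A))"
    using keys_add[of a' b'] by (intro image_eqI[of _ _ "a' + b'"]) (auto simp: boundary_def frag_extend_add)
next
  fix a :: "elem_cube \<Rightarrow>\<^sub>0 int" and j :: int
  assume "a \<in> boundary ` carrier (free_Abelian_group (kcubes_of d (Suc k) A))"
  then obtain a' where "a = boundary a'" "Poly_Mapping.keys a' \<subseteq> kcubes_of d (Suc k) A" by auto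
  then show "frag_cmul j a \<in> boundary ` carrier (free_Abelian_group (kcubes_of d (Suc k) A))"
    using keys_cmul[of j a'] by (intro image_eqI[of _ _ "frag_cmul j a'"]) (auto simp: boundary_def frag_extend_cmul)
qed

lemma kcubes_mono: "X \<subseteq> Y \<Longrightarrow> kcubes_of d k X \<subseteq> kcubes_of d k Y"
  unfolding kcubes_of_def cubes_of_def by auto

lemma cycles_mono: assumes X: "X \<subseteq> Y" shows "cycles d k X \<subseteq> cycles d k Y"
proof
  fix c assume "c \<in> cycles d k X"
  then show "c \<in> cycles d k Y" unfolding cycles_def chain_group_def
    using kcubes_mono[OF X, of d k] by auto
qed

lemma boundaries_mono: "X \<subseteq> Y \<Longrightarrow> boundaries d k X \<subseteq> boundaries d k Y"
  unfolding boundaries_def chain_group_def using kcubes_mono[of X Y d "Suc k"] by auto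

lemma finite_cubes_of:
  assumes "bounded_pts A" shows "finite (cubes_of d A)"
proof -
  obtain M where M: "\<forall>x\<in>A. \<forall>i<length x. \<bar>x ! i\<bar> \<le> M" using assms unfolding bounded_pts_def by blast
  define N where "N = \<lceil>M\<rceil>"
  have "cubes_of d A \<subseteq> {xs. set xs \<subseteq> {-N..N} \<times> UNIV \<and> length xs = d}"
  proof
    fix Q assume Q: "Q \<in> cubes_of d A"
    define p where "p = map (\<lambda>I. real_of_int (fst I)) Q"
    have "\<forall>i<length Q. p ! i \<in> interval_set (Q ! i)"
      unfolding p_def interval_set_def by simp
    then have "p \<in> cube_set Q" unfolding cube_set_def p_def by simp
    then have pA: "p \<in> A" using Q unfolding cubes_of_def by auto
    have "set Q \<subseteq> {-N..N} \<times> UNIV"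
    proof
      fix I assume "I \<in> set Q"
      then obtain i where i: "i < length Q" "Q ! i = I" by (auto simp: in_set_conv_nth)
      have "length p = length Q" unfolding p_def by simp
      then have "\<bar>p ! i\<bar> \<le> M" using M pA i by metis
      then have "real_of_int \<bar>fst I\<bar> \<le> M" using i unfolding p_def by simp
      moreover have "M \<le> real_of_int N" unfolding N_def by (rule le_of_int_ceiling)
      ultimately have "\<bar>fst I\<bar> \<le> N" by linarith
      then show "I \<in> {-N..N} \<times> UNIV" by (cases I) auto
    qed
    then show "Q \<in> {xs. set xs \<subseteq> {-N..N} \<times> UNIV \<and> length xs = d}" using Q unfolding cubes_of_def by auto
  qed
  moreover have "finite {xs. set xs \<subseteq> {-N..N} \<times> (UNIV :: bool set) \<and> length xs = d}"
    by (rule finite_lists_length_eq) auto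
  ultimately show ?thesis by (rule finite_subset)
qed

lemma finite_kcubes: "bounded_pts A \<Longrightarrow> finite (kcubes_of d k A)"
  using finite_cubes_of[of A d] unfolding kcubes_of_def by auto




lemma cycles_restrict:
  assumes X: "X \<subseteq> Y" and c: "c \<in> cycles d k Y"
    and z: "\<forall>P\<in>kcubes_of d k Y - kcubes_of d k X. poly_mapping.lookup c P = 0"
  shows "c \<in> cycles d k X"
proof -
  have "Poly_Mapping.keys c \<subseteq> kcubes_of d k X"
  proof
    fix P assume P: "P \<in> Poly_Mapping.keys c"
    then have "P \<in> kcubes_of d k Y" using c unfolding cycles_def chain_group_def by auto
    moreover have "poly_mapping.lookup c P \<noteq> 0" using P by (simp add: in_keys_iff)
    ultimately show "P \<in> kcubes_of d k X" using z by blast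
  qed
  then show ?thesis using c unfolding cycles_def chain_group_def by auto
qed

lemma boundaries_span:
  assumes X: "X \<subseteq> Y" and fin: "finite (kcubes_of d (Suc k) Y)"
  shows "boundaries d k Y \<subseteq> Bspan (boundaries d k X) (\<lambda>P. boundary (frag_of P))
            (kcubes_of d (Suc k) Y - kcubes_of d (Suc k) X)"
proof
  fix y assume "y \<in> boundaries d k Y"
  then obtain c where c: "y = boundary c" "Poly_Mapping.keys c \<subseteq> kcubes_of d (Suc k) Y"
    unfolding boundaries_def chain_group_def by auto
  define T where "T = kcubes_of d (Suc k) Y - kcubes_of d (Suc k) X"
  have "Poly_Mapping.keys c \<subseteq> kcubes_of d (Suc k) X \<union> T" using c(2) unfolding T_def by auto
  then obtain a e where ae: "Poly_Mapping.keys a \<subseteq> kcubes_of d (Suc k) X" "Poly_Mapping.keys e \<subseteq> T" "a + e = c"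
    by (rule frag_split)
  have finT: "finite T" using fin unfolding T_def by auto
  have "boundary e = (\<Sum>i\<in>Poly_Mapping.keys e. frag_cmul (poly_mapping.lookup e i) (cube_boundary i))"
    unfolding boundary_def frag_extend_def ..
  also have "\<dots> = (\<Sum>P\<in>T. frag_cmul (poly_mapping.lookup e P) (boundary (frag_of P)))"
    unfolding boundary_def frag_extend_of
    by (rule sum.mono_neutral_left[OF finT ae(2)]) (auto simp: in_keys_iff)
  finally have be: "boundary e = (\<Sum>P\<in>T. frag_cmul (poly_mapping.lookup e P) (boundary (frag_of P)))" .
  have "boundary a \<in> boundaries d k X" unfolding boundaries_def chain_group_def using ae(1) by auto
  moreover have "y = boundary a + boundary e" using c(1) ae(3) by (simp add: boundary_def frag_extend_add[symmetric])
  ultimately show "y \<in> Bspan (boundaries d k X) (\<lambda>P. boundary (frag_of P)) T"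
    unfolding Bspan_def using be
    by (intro CollectI exI[of _ "boundary a"] exI[of _ "poly_mapping.lookup e"]) simp
qed

lemma betti_char:
  assumes "bounded_pts A"
  shows "betti d k A \<in> rset (boundaries d k A) (cycles d k A)"
    and "\<And>n. n \<in> rset (boundaries d k A) (cycles d k A) \<Longrightarrow> n \<le> betti d k A"
proof -
  let ?R = "rset (boundaries d k A) (cycles d k A)"
  have ZS: "cycles d k A \<subseteq> {c. Poly_Mapping.keys c \<subseteq> kcubes_of d k A}"
    unfolding cycles_def chain_group_def by auto
  have eq: "betti d k A = Sup ?R"
    unfolding betti_def free_rank_def homology_group_def rset_def
    using bridge[OF closedM_boundaries closedM_cycles ZS] unfolding chain_group_def by simp
  have bound: "n \<le> card (kcubes_of d k A)" if "n \<in> ?R" for n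
  proof -
    have "\<exists>z. (\<forall>i<n. z i \<in> cycles d k A) \<and> indepI (boundaries d k A) {..<n} z"
      using that by (simp add: rset_def)
    then obtain z where z: "\<forall>i<n. z i \<in> cycles d k A" "indepI (boundaries d k A) {..<n} z"
      by blast
    have "card {..<n} \<le> card (kcubes_of d k A)"
      by (rule rank_bound[OF _ z(2)]) (use z(1) ZS closedM_boundaries finite_kcubes[OF assms]
          in \<open>auto simp: closedM_def\<close>)
    then show ?thesis by simp
  qed
  have fR: "finite ?R" using bound finite_nat_set_iff_bounded_le by blast
  have "0 \<in> ?R" unfolding rset_def indepI_def by simp
  then have ne: "?R \<noteq> {}" by blast
  show "betti d k A \<in> ?R" using eq cSup_eq_Max[OF fR ne] Max_in[OF fR ne] by simp
  show "n \<le> betti d k A" if "n \<in> ?R" for n using eq cSup_eq_Max[OF fR ne] Max_ge[OF fR that] by simp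
qed




theorem lemma3p1:
  fixes d q :: nat and X Y :: "real list set"
  assumes "q < d"
    and "cubical d X" and "cubical d Y"
    and "bounded_pts X" and "bounded_pts Y"
    and "X \<subseteq> Y"
  shows "\<bar>int (betti d q Y) - int (betti d q X)\<bar> \<le> int (num_cubes d Y) - int (num_cubes d X)"
proof -
  note XY = assms(6) and bX = assms(4) and bY = assms(5)
  define S where "S = kcubes_of d q Y - kcubes_of d q X"
  define T where "T = kcubes_of d (Suc q) Y - kcubes_of d (Suc q) X"
  have finS: "finite S" unfolding S_def using finite_kcubes[OF bY] by auto
  have finT: "finite T" unfolding T_def using finite_kcubes[OF bY] by auto
  have up: "betti d q Y \<le> betti d q X + card S"
  proof -
    have "betti d q Y \<in> rset (boundaries d q Y) (cycles d q Y)" by (rule betti_char(1)[OF bY])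
    then have "\<exists>z. (\<forall>i<betti d q Y. z i \<in> cycles d q Y) \<and> indepI (boundaries d q Y) {..<betti d q Y} z"
      by (simp add: rset_def)
    then obtain z where z: "\<forall>i<betti d q Y. z i \<in> cycles d q Y" "indepI (boundaries d q Y) {..<betti d q Y} z"
      by blast
    have zM: "\<forall>i\<in>{..<betti d q Y}. z i \<in> cycles d q Y" using z(1) by simp
    obtain I' w where I': "I' \<subseteq> {..<betti d q Y}" "card {..<betti d q Y} \<le> card I' + card S"
      "indepI (boundaries d q Y) I' w" "\<forall>i\<in>I'. w i \<in> cycles d q Y"
      "\<forall>i\<in>I'. \<forall>P\<in>S. poly_mapping.lookup (w i) P = 0"
      using kill_set[OF finS finite_lessThan z(2) zM closedM_cycles] by (elim exE conjE) (rule that)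
    have wX: "\<forall>i\<in>I'. w i \<in> cycles d q X"
      using cycles_restrict[OF XY] I'(4,5) unfolding S_def by blast
    have "indepI (boundaries d q X) I' w"
      using indepI_mono[OF I'(3) boundaries_mono[OF XY]] .
    then have "card I' \<in> rset (boundaries d q X) (cycles d q X)"
      using rset_card[OF finite_subset[OF I'(1) finite_lessThan]] wX by blast
    then have "card I' \<le> betti d q X" by (rule betti_char(2)[OF bX])
    then show ?thesis using I'(2) by simp
  qed
  have low: "betti d q X \<le> betti d q Y + card T"
  proof -
    have "betti d q X \<in> rset (boundaries d q X) (cycles d q X)" by (rule betti_char(1)[OF bX])
    then have "\<exists>z. (\<forall>i<betti d q X. z i \<in> cycles d q X) \<and> indepI (boundaries d q X) {..<betti d q X} z"
      by (simp add: rset_def)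
    then obtain x where x: "\<forall>i<betti d q X. x i \<in> cycles d q X" "indepI (boundaries d q X) {..<betti d q X} x"
      by blast
    obtain I' where I': "I' \<subseteq> {..<betti d q X}" "card {..<betti d q X} \<le> card I' + card T"
      "indepI (Bspan (boundaries d q X) (\<lambda>P. boundary (frag_of P)) T) I' x"
      using add_set[OF finT closedM_boundaries finite_lessThan x(2), of "\<lambda>P. boundary (frag_of P)"]
      by (elim exE conjE) (rule that)
    have "indepI (boundaries d q Y) I' x"
      using indepI_mono[OF I'(3)] boundaries_span[OF XY finite_kcubes[OF bY]] unfolding T_def by blast
    moreover have "\<forall>i\<in>I'. x i \<in> cycles d q Y" using x(1) I'(1) cycles_mono[OF XY] by blast
    ultimately have "card I' \<in> rset (boundaries d q Y) (cycles d q Y)"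
      using rset_card[OF finite_subset[OF I'(1) finite_lessThan]] by blast
    then have "card I' \<le> betti d q Y" by (rule betti_char(2)[OF bY])
    then show ?thesis using I'(2) by simp
  qed
  have fcY: "finite (cubes_of d Y)" by (rule finite_cubes_of[OF bY])
  have sub: "cubes_of d X \<subseteq> cubes_of d Y" using XY unfolding cubes_of_def by auto
  have ST: "S \<union> T \<subseteq> cubes_of d Y - cubes_of d X"
    unfolding S_def T_def kcubes_of_def by auto
  have disj: "S \<inter> T = {}" unfolding S_def T_def kcubes_of_def by auto
  have "card S + card T = card (S \<union> T)" using card_Un_disjoint[OF finS finT disj] by simp
  also have "\<dots> \<le> card (cubes_of d Y - cubes_of d X)" using ST fcY by (intro card_mono) auto
  also have "\<dots> = card (cubes_of d Y) - card (cubes_of d X)"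
    using card_Diff_subset[OF finite_subset[OF sub fcY] sub] .
  finally have cnt: "card S + card T \<le> num_cubes d Y - num_cubes d X" unfolding num_cubes_def .
  have "num_cubes d X \<le> num_cubes d Y" unfolding num_cubes_def using card_mono[OF fcY sub] .
  then show ?thesis using up low cnt by linarith
qed


end
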